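(* Let $f_\bullet\colon X\to Z$ be a set mapping between finite metric spaces, $V=\mathrm{PH}_0(X)$, $U=\mathrm{PH}_0(Z)$, $f_0\colon V_0\to U_0$ the induced linear map, and set $A^\pm=f_0(\ker^\pm_a(V))$ and $B^\pm=\ker^\pm_b(U)$. Then for all $a\in S^V$ and $b\in S^U$, $$\mathcal{M}^0_f(a,b)=\dim\left(\frac{A^++B^-}{A^-+B^-}\cap\frac{A^-+B^+}{A^-+B^-}\right),$$ where both quotients are regarded as subspaces of $U_0/(A^-+B^-)$.
   Context: All vector spaces are over $\mathbb{Z}_2$. For a finite metric space $(X,d^X)$ and $r\ge 0$, $\mathrm{VR}_r(X)$ is the graph on $X$ with edges $[x,y]$ whenever $d^X(x,y)\le r$; $\mathrm{PH}_0(X)$ is the persistence module $r\mapsto H_0(\mathrm{VR}_r(X))$ (vector space freely generated by connected components) with structure maps $\rho_{rs}$ induced by inclusion, so $\mathrm{PH}_0(X)_0$ has basis $X$. Its barcode is the multiset $(S^V,m^V)$ of finite death values $b>0$ of the bars $[0,b)$ in its interval decomposition (infinite bar excluded). For a persistence module $U$ and $b>0$: $\ker^+_b(U)=\ker(\rho^U_{0b})$, $\ker^-_b(U)=\bigcup_{0\le r<b}\ker(\rho^U_{0r})$. The linear map $f_0$ sends basis element $x$ to $f_\bullet(x)$. The block function is $\mathcal{M}^0_f(a,b)=\dim\frac{f_0(\ker^+_a V)\cap \ker^+_b U}{f_0(\ker^-_a V)\cap\ker^+_b U+f_0(\ker^+_a V)\cap \ker^-_b U}$. *)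

theory Defs
  imports Complex_Main "HOL-Library.Z2" "HOL-Library.Function_Algebras"
begin

text \<open>A finite metric space is a finite type 'x together with a metric d.\<close>

definition is_metric :: "('x \<Rightarrow> 'x \<Rightarrow> real) \<Rightarrow> bool" where
  "is_metric d \<longleftrightarrow> (\<forall>x y. 0 \<le> d x y) \<and> (\<forall>x y. d x y = 0 \<longleftrightarrow> x = y)
     \<and> (\<forall>x y. d x y = d y x) \<and> (\<forall>x y z. d x z \<le> d x y + d y z)"

text \<open>The Z2-vector space with basis 'x is the type 'x => bit (pointwise operations).\<close>

definition zscale :: "bit \<Rightarrow> ('x \<Rightarrow> bit) \<Rightarrow> ('x \<Rightarrow> bit)" where
  "zscale c v = (\<lambda>x. c * v x)"

definition dimZ2 :: "('x \<Rightarrow> bit) set \<Rightarrow> nat" where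
  "dimZ2 S = vector_space.dim zscale S"

definition ssum :: "('x \<Rightarrow> bit) set \<Rightarrow> ('x \<Rightarrow> bit) set \<Rightarrow> ('x \<Rightarrow> bit) set" where
  "ssum A B = {a + b | a b. a \<in> A \<and> b \<in> B}"

text \<open>Quotients: the coset of v modulo C, the image of W in the quotient U/C,
  and the dimension of a subspace S of the quotient U/C (via its preimage:
  dim S = dim (q^{-1} S) - dim C).\<close>
definition coset :: "('x \<Rightarrow> bit) set \<Rightarrow> ('x \<Rightarrow> bit) \<Rightarrow> ('x \<Rightarrow> bit) set" where
  "coset C v = (\<lambda>c. v + c) ` C"

definition quot_sub :: "('x \<Rightarrow> bit) set \<Rightarrow> ('x \<Rightarrow> bit) set \<Rightarrow> ('x \<Rightarrow> bit) set set" where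
  "quot_sub W C = coset C ` W"

definition dim_quot :: "('x \<Rightarrow> bit) set set \<Rightarrow> ('x \<Rightarrow> bit) set \<Rightarrow> nat" where
  "dim_quot S C = dimZ2 {v. coset C v \<in> S} - dimZ2 C"

definition vr_edges :: "('x \<Rightarrow> 'x \<Rightarrow> real) \<Rightarrow> real \<Rightarrow> ('x \<times> 'x) set" where
  "vr_edges d r = {(x, y). d x y \<le> r}"

definition components :: "('x \<Rightarrow> 'x \<Rightarrow> real) \<Rightarrow> real \<Rightarrow> 'x set set" where
  "components d r = UNIV // ((vr_edges d r \<union> (vr_edges d r)\<inverse>)\<^sup>*)"

text \<open>PH_0(X)_r = Z2-space on the components, i.e. functions 'x set => bit supported on
  components d r; the structure map rho_{0r} sends a basis point to its component.\<close>
definition rho0 :: "('x \<Rightarrow> 'x \<Rightarrow> real) \<Rightarrow> real \<Rightarrow> ('x \<Rightarrow> bit) \<Rightarrow> ('x set \<Rightarrow> bit)" where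
  "rho0 d r v = (\<lambda>K. if K \<in> components d r then (\<Sum>x\<in>K. v x) else 0)"

definition ker_plus :: "('x \<Rightarrow> 'x \<Rightarrow> real) \<Rightarrow> real \<Rightarrow> ('x \<Rightarrow> bit) set" where
  "ker_plus d b = {v. rho0 d b v = 0}"

definition ker_minus :: "('x \<Rightarrow> 'x \<Rightarrow> real) \<Rightarrow> real \<Rightarrow> ('x \<Rightarrow> bit) set" where
  "ker_minus d b = (\<Union>r\<in>{r. 0 \<le> r \<and> r < b}. {v. rho0 d r v = 0})"

text \<open>Barcode (set of finite death values) of PH_0(X): all bars are born at 0, and
  dim PH_0(X)_r = number of components of VR_r(X) = number of bars alive at r,
  so b > 0 is a finite death value iff the number of components drops at b.\<close>
definition barcode :: "('x \<Rightarrow> 'x \<Rightarrow> real) \<Rightarrow> real set" where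
  "barcode d = {b. 0 < b \<and> (\<forall>s. 0 \<le> s \<and> s < b \<longrightarrow> card (components d b) < card (components d s))}"

definition lin0 :: "('x \<Rightarrow> 'z) \<Rightarrow> ('x \<Rightarrow> bit) \<Rightarrow> ('z \<Rightarrow> bit)" where
  "lin0 f v = (\<lambda>z. \<Sum>x\<in>{x. f x = z}. v x)"

definition block0 :: "('x \<Rightarrow> 'x \<Rightarrow> real) \<Rightarrow> ('z \<Rightarrow> 'z \<Rightarrow> real) \<Rightarrow> ('x \<Rightarrow> 'z)
    \<Rightarrow> real \<Rightarrow> real \<Rightarrow> nat" where
  "block0 dX dZ f a b =
     (let N = lin0 f ` ker_plus dX a \<inter> ker_plus dZ b;
          D = ssum (lin0 f ` ker_minus dX a \<inter> ker_plus dZ b)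
                   (lin0 f ` ker_plus dX a \<inter> ker_minus dZ b)
      in dim_quot (quot_sub N D) D)"

end

theory Submission imports Defs begin

lemma bit_self_add [simp]: "(c::bit) + c = 0"
  by (cases c) simp_all

lemma fun_self_add [simp]: "(u::'x \<Rightarrow> bit) + u = 0"
  by (rule ext) simp

lemma vs_zscale: "vector_space (zscale :: bit \<Rightarrow> ('x \<Rightarrow> bit) \<Rightarrow> ('x \<Rightarrow> bit))"
  by unfold_locales (simp_all only: zscale_def plus_fun_def ring_distribs mult.assoc mult_1_left)

lemma fun_sum_apply: "(\<Sum>i\<in>A. g i) x = (\<Sum>i\<in>A. (g i x :: 'b::comm_monoid_add))"
  by (induction A rule: infinite_finite_induct) auto

definition ebasis :: "'x \<Rightarrow> ('x \<Rightarrow> bit)" where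
  "ebasis x = (\<lambda>y. if y = x then 1 else 0)"

lemma fdvs: "finite_dimensional_vector_space (zscale :: bit \<Rightarrow> ('x::finite \<Rightarrow> bit) \<Rightarrow> ('x \<Rightarrow> bit)) (range (ebasis :: 'x \<Rightarrow> _))"
proof -
  interpret V: vector_space "zscale :: bit \<Rightarrow> ('x::finite \<Rightarrow> bit) \<Rightarrow> ('x \<Rightarrow> bit)" by (rule vs_zscale)
  let ?E = "range (ebasis :: 'x \<Rightarrow> 'x \<Rightarrow> bit)"
  have inj: "inj (ebasis :: 'x \<Rightarrow> _)"
  proof (rule injI)
    fix x y :: 'x
    assume "ebasis x = ebasis y"
    then have "ebasis x x = ebasis y x" by simp
    then show "x = y" by (simp add: ebasis_def split: if_splits)
  qed
  have ind: "V.independent (?E)"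
  proof
    assume dep: "V.dependent (?E)"
    have fin: "finite (?E)" by simp
    have "\<exists>u. (\<exists>v\<in>?E. u v \<noteq> 0) \<and> (\<Sum>v\<in>?E. zscale (u v) v) = 0"
      using iffD1[OF V.dependent_finite[OF fin] dep] .
    then obtain u where u: "\<exists>v\<in>?E. u v \<noteq> 0" "(\<Sum>v\<in>?E. zscale (u v) v) = 0"
      by blast
    from u(1) obtain x where x: "u (ebasis x) \<noteq> 0" by auto
    have "(\<Sum>v\<in>?E. zscale (u v) v) = (\<Sum>y\<in>UNIV. zscale (u (ebasis y)) (ebasis y))"
      by (simp only: sum.reindex[OF inj] comp_def)
    then have "(\<Sum>v\<in>?E. zscale (u v) v) x = (\<Sum>y\<in>UNIV. zscale (u (ebasis y)) (ebasis y) x)"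
      by (simp only: fun_sum_apply)
    also have "\<dots> = (\<Sum>y\<in>UNIV. if y = x then u (ebasis x) else 0)"
      by (rule sum.cong) (auto simp: zscale_def ebasis_def)
    also have "\<dots> = u (ebasis x)" by simp
    finally show False using u(2) x by simp
  qed
  have sp: "V.span (?E) = UNIV"
  proof (intro set_eqI iffI)
    fix v :: "'x \<Rightarrow> bit"
    have eq: "v = (\<Sum>y\<in>UNIV. zscale (v y) (ebasis y))"
    proof (rule ext)
      fix x
      have "(\<Sum>y\<in>UNIV. zscale (v y) (ebasis y)) x = (\<Sum>y\<in>UNIV. zscale (v y) (ebasis y) x)"
        by (simp only: fun_sum_apply)
      also have "\<dots> = (\<Sum>y\<in>UNIV. if y = x then v x else 0)"
        by (rule sum.cong) (auto simp: zscale_def ebasis_def)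
      also have "\<dots> = v x" by simp
      finally show "v x = (\<Sum>y\<in>UNIV. zscale (v y) (ebasis y)) x" by simp
    qed
    have mem: "(\<Sum>y\<in>UNIV. zscale (v y) (ebasis y)) \<in> V.span (?E)"
      by (intro V.span_sum V.span_scale V.span_base) auto
    show "v \<in> V.span (?E)" using mem eq by simp
  qed simp
  show ?thesis
    by unfold_locales (auto simp: ind sp)
qed

interpretation Z: finite_dimensional_vector_space "zscale :: bit \<Rightarrow> ('x::finite \<Rightarrow> bit) \<Rightarrow> ('x \<Rightarrow> bit)" "range ebasis"
  by (rule fdvs)

lemma subspace_iff: "Z.subspace (S :: ('x::finite \<Rightarrow> bit) set) \<longleftrightarrow> 0 \<in> S \<and> (\<forall>u\<in>S. \<forall>v\<in>S. u + v \<in> S)"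
proof -
  have "zscale c v \<in> S" if "0 \<in> S" "v \<in> S" for c v
  proof (cases c)
    case zero
    then have "zscale c v = 0" by (simp add: zscale_def fun_eq_iff)
    then show ?thesis using that by metis
  next
    case one
    then have "zscale c v = v" by (simp add: zscale_def fun_eq_iff)
    then show ?thesis using that by metis
  qed
  then show ?thesis unfolding Z.subspace_def by auto
qed


definition sg :: "('x \<Rightarrow> bit) set \<Rightarrow> bool" where
  "sg S \<longleftrightarrow> 0 \<in> S \<and> (\<forall>u\<in>S. \<forall>v\<in>S. u + v \<in> S)"

lemma fun_self_add2 [simp]: "(u::'x \<Rightarrow> bit) + (u + w) = w"
  by (simp add: add.assoc[symmetric])

lemma sgD: "sg S \<Longrightarrow> 0 \<in> S" "sg S \<Longrightarrow> u \<in> S \<Longrightarrow> v \<in> S \<Longrightarrow> u + v \<in> S"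
  by (auto simp: sg_def)

lemma sg_Int: "sg A \<Longrightarrow> sg B \<Longrightarrow> sg (A \<inter> B)"
  by (auto simp: sg_def)

lemma sg_ssum: "sg A \<Longrightarrow> sg B \<Longrightarrow> sg (ssum A B)"
  unfolding sg_def ssum_def
proof (intro conjI ballI)
  assume A: "0 \<in> A \<and> (\<forall>u\<in>A. \<forall>v\<in>A. u + v \<in> A)" and B: "0 \<in> B \<and> (\<forall>u\<in>B. \<forall>v\<in>B. u + v \<in> B)"
  show "0 \<in> {a + b |a b. a \<in> A \<and> b \<in> B}" using A B by force
  fix u v assume "u \<in> {a + b |a b. a \<in> A \<and> b \<in> B}" "v \<in> {a + b |a b. a \<in> A \<and> b \<in> B}"
  then obtain a b a' b' where "u = a + b" "v = a' + b'" "a \<in> A" "b \<in> B" "a' \<in> A" "b' \<in> B" by blast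
  moreover have "u + v = (a + a') + (b + b')" if "u = a + b" "v = a' + b'" using that by (simp add: add_ac)
  ultimately show "u + v \<in> {a + b |a b. a \<in> A \<and> b \<in> B}" using A B by blast
qed

lemma sg_subspace: "sg S \<Longrightarrow> Z.subspace (S :: ('x::finite \<Rightarrow> bit) set)"
  by (simp add: subspace_iff sg_def)

lemma preimage_quot:
  assumes W: "sg W" and C0: "0 \<in> C" and CW: "C \<subseteq> W"
  shows "{v. coset C v \<in> quot_sub W C} = W"
proof (intro set_eqI iffI)
  fix v assume "v \<in> {v. coset C v \<in> quot_sub W C}"
  then obtain w where w: "w \<in> W" "coset C v = coset C w" by (auto simp: quot_sub_def)
  have "v \<in> coset C v" using C0 by (force simp: coset_def)
  then have "v \<in> coset C w" using w by simp
  then obtain c where "c \<in> C" "v = w + c" by (auto simp: coset_def)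
  then show "v \<in> W" using W CW w by (auto intro: sgD)
qed (auto simp: quot_sub_def)

lemma main_alg:
  fixes Ap Am Bp Bm :: "('x::finite \<Rightarrow> bit) set"
  assumes sAp: "sg Ap" and sAm: "sg Am" and sBp: "sg Bp" and sBm: "sg Bm"
    and AA: "Am \<subseteq> Ap" and BB: "Bm \<subseteq> Bp"
  shows "dim_quot (quot_sub (Ap \<inter> Bp) (ssum (Am \<inter> Bp) (Ap \<inter> Bm))) (ssum (Am \<inter> Bp) (Ap \<inter> Bm))
    = dim_quot (quot_sub (ssum Ap Bm) (ssum Am Bm) \<inter> quot_sub (ssum Am Bp) (ssum Am Bm)) (ssum Am Bm)"
proof -
  define N where "N = Ap \<inter> Bp"
  define D where "D = ssum (Am \<inter> Bp) (Ap \<inter> Bm)"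
  define C where "C = ssum Am Bm"
  have sN: "sg N" unfolding N_def by (intro sg_Int sAp sBp)
  have sD: "sg D" unfolding D_def by (intro sg_Int sg_ssum sAp sBp sAm sBm)
  have sC: "sg C" unfolding C_def by (intro sg_ssum sAm sBm)
  have sL: "sg (ssum Ap Bm)" by (intro sg_ssum sAp sBm)
  have sR: "sg (ssum Am Bp)" by (intro sg_ssum sAm sBp)
  have DN: "D \<subseteq> N"
  proof
    fix v assume "v \<in> D"
    then obtain x y where "x \<in> Am" "x \<in> Bp" "y \<in> Ap" "y \<in> Bm" "v = x + y" by (auto simp: D_def ssum_def)
    then show "v \<in> N" using AA BB sAp sBp by (auto simp: N_def intro: sgD)
  qed
  have CL: "C \<subseteq> ssum Ap Bm"
    using AA sAp sBm by (auto simp: C_def ssum_def)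
  have CR: "C \<subseteq> ssum Am Bp"
    using BB sAm sBp by (auto simp: C_def ssum_def)
  have I1: "ssum Ap Bm \<inter> ssum Am Bp = ssum C N"
  proof (intro set_eqI iffI)
    fix v assume "v \<in> ssum Ap Bm \<inter> ssum Am Bp"
    then obtain p m m' q where pm: "p \<in> Ap" "m \<in> Bm" "m' \<in> Am" "q \<in> Bp" "v = p + m" "v = m' + q"
      by (auto simp: ssum_def)
    have e1: "p + m' = q + m"
    proof -
      have "p + m' = (p + m) + (m + m')" by (simp add: add_ac)
      also have "\<dots> = (m' + q) + (m + m')" using pm by simp
      also have "\<dots> = q + m" by (simp add: add_ac)
      finally show ?thesis .
    qed
    have "p + m' \<in> Ap" using pm AA sAp by (auto intro: sgD)
    moreover have "q + m \<in> Bp" using pm BB sBp by (auto intro: sgD)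
    ultimately have n: "p + m' \<in> N" using e1 by (simp add: N_def)
    have c: "m' + m \<in> C" using pm by (auto simp: C_def ssum_def)
    have veq: "v = (m' + m) + (p + m')" using pm by (simp add: add_ac)
    show "v \<in> ssum C N" unfolding ssum_def using veq n c by blast
  next
    fix v assume "v \<in> ssum C N"
    then obtain m' m n where mm: "m' \<in> Am" "m \<in> Bm" "n \<in> Ap" "n \<in> Bp" "v = (m' + m) + n"
      by (auto simp: ssum_def C_def N_def)
    have a1: "m' + n \<in> Ap" using mm AA sAp by (auto intro: sgD)
    have e1: "v = (m' + n) + m" using mm by (simp add: add_ac)
    have a2: "m + n \<in> Bp" using mm BB sBp by (auto intro: sgD)
    have e2: "v = m' + (m + n)" using mm by (simp add: add_ac)
    have "v \<in> ssum Ap Bm" unfolding ssum_def using a1 e1 mm by blast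
    moreover have "v \<in> ssum Am Bp" unfolding ssum_def using a2 e2 mm by blast
    ultimately show "v \<in> ssum Ap Bm \<inter> ssum Am Bp" by blast
  qed
  have I2: "C \<inter> N = D"
  proof (intro set_eqI iffI)
    fix v assume "v \<in> C \<inter> N"
    then obtain m' m where mm: "m' \<in> Am" "m \<in> Bm" "v = m' + m" "v \<in> Ap" "v \<in> Bp"
      by (auto simp: C_def N_def ssum_def)
    have e1: "m = v + m'" using mm(3) by (simp add: add_ac)
    have m'A: "m' \<in> Ap" using mm(1) AA by blast
    have "v + m' \<in> Ap" by (rule sgD(2)[OF sAp mm(4) m'A])
    with e1 have mA: "m \<in> Ap" by simp
    have e2: "m' = v + m" using mm(3) by (simp add: add_ac)
    have mB: "m \<in> Bp" using mm(2) BB by blast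
    have "v + m \<in> Bp" by (rule sgD(2)[OF sBp mm(5) mB])
    with e2 have m'B: "m' \<in> Bp" by simp
    show "v \<in> D" unfolding D_def ssum_def using mm(1,2,3) mA m'B by blast
  next
    fix v assume "v \<in> D"
    then obtain x y where xy: "x \<in> Am" "x \<in> Bp" "y \<in> Ap" "y \<in> Bm" "v = x + y" by (auto simp: D_def ssum_def)
    then have "v \<in> C" by (auto simp: C_def ssum_def)
    then show "v \<in> C \<inter> N" using DN \<open>v \<in> D\<close> by auto
  qed
  have L: "dim_quot (quot_sub N D) D = dimZ2 N - dimZ2 D"
    unfolding dim_quot_def using preimage_quot[OF sN sgD(1)[OF sD] DN] by simp
  have "{v. coset C v \<in> quot_sub (ssum Ap Bm) C \<inter> quot_sub (ssum Am Bp) C}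
      = {v. coset C v \<in> quot_sub (ssum Ap Bm) C} \<inter> {v. coset C v \<in> quot_sub (ssum Am Bp) C}" by auto
  also have "\<dots> = ssum C N"
    using preimage_quot[OF sL sgD(1)[OF sC] CL] preimage_quot[OF sR sgD(1)[OF sC] CR] I1 by simp
  finally have R: "dim_quot (quot_sub (ssum Ap Bm) C \<inter> quot_sub (ssum Am Bp) C) C = dimZ2 (ssum C N) - dimZ2 C"
    unfolding dim_quot_def by simp
  have "Z.dim {x + y |x y. x \<in> C \<and> y \<in> N} + Z.dim (C \<inter> N) = Z.dim C + Z.dim N"
    by (intro Z.dim_sums_Int sg_subspace sC sN)
  then have "dimZ2 (ssum C N) + dimZ2 D = dimZ2 C + dimZ2 N"
    using I2 by (simp add: dimZ2_def ssum_def)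
  then show ?thesis using L R unfolding N_def[symmetric] D_def[symmetric] C_def[symmetric] by linarith
qed

lemma rho0_add: "rho0 d r (v + w) = rho0 d r v + rho0 d r w"
proof (rule ext)
  fix K
  show "rho0 d r (v + w) K = (rho0 d r v + rho0 d r w) K"
  proof (cases "K \<in> components d r")
    case True then show ?thesis by (simp only: rho0_def plus_fun_def sum.distrib if_True)
  next
    case False then show ?thesis by (simp only: rho0_def plus_fun_def if_False add_0_left)
  qed
qed

lemma rho0_zero: "rho0 d r 0 = 0"
  by (rule ext) (simp only: rho0_def zero_fun_def sum.neutral_const simp_thms split: if_split)

lemma lin0_add: "lin0 f (v + w) = lin0 f v + lin0 f w"
  by (rule ext) (simp only: lin0_def plus_fun_def sum.distrib)

lemma lin0_zero: "lin0 f 0 = 0"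
  by (rule ext) (simp only: lin0_def zero_fun_def sum.neutral_const)

lemma sg_image_lin0: "sg S \<Longrightarrow> sg (lin0 f ` S)"
  unfolding sg_def
proof (elim conjE, intro conjI ballI)
  assume S0: "0 \<in> S" and Sp: "\<forall>u\<in>S. \<forall>v\<in>S. u + v \<in> S"
  have "0 = lin0 f 0" by (rule lin0_zero[symmetric])
  then show "0 \<in> lin0 f ` S" using S0 by (rule image_eqI)
  fix u v assume "u \<in> lin0 f ` S" "v \<in> lin0 f ` S"
  then obtain p q where pq: "p \<in> S" "q \<in> S" "u = lin0 f p" "v = lin0 f q" by blast
  then have "u + v = lin0 f (p + q)" by (simp only: lin0_add)
  moreover have "p + q \<in> S" using Sp pq by blast
  ultimately show "u + v \<in> lin0 f ` S" by blast
qed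

lemma equiv_R: "equiv UNIV ((E \<union> E\<inverse>)\<^sup>*)"
  unfolding equiv_def
  using refl_rtrancl[of "E \<union> E\<inverse>"] sym_rtrancl[OF sym_Un_converse[of E]] trans_rtrancl[of "E \<union> E\<inverse>"] by simp

lemma rho0_mono:
  fixes d :: "'x::finite \<Rightarrow> 'x \<Rightarrow> real"
  assumes rs: "r \<le> s" and v: "rho0 d r v = 0"
  shows "rho0 d s v = 0"
proof (rule ext)
  fix K
  define Rr where "Rr = (vr_edges d r \<union> (vr_edges d r)\<inverse>)\<^sup>*"
  define Rs where "Rs = (vr_edges d s \<union> (vr_edges d s)\<inverse>)\<^sup>*"
  have eqr: "equiv UNIV Rr" unfolding Rr_def by (rule equiv_R)
  have "vr_edges d r \<subseteq> vr_edges d s" using rs by (auto simp: vr_edges_def)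
  then have RrRs: "Rr \<subseteq> Rs" unfolding Rr_def Rs_def by (intro rtrancl_mono) blast
  have cr: "components d r = UNIV // Rr" by (simp only: components_def Rr_def)
  have cs: "components d s = UNIV // Rs" by (simp only: components_def Rs_def)
  show "rho0 d s v K = 0 K"
  proof (cases "K \<in> components d s")
    case False then show ?thesis by (simp only: rho0_def zero_fun_def if_False)
  next
    case True
    then obtain y where y: "K = Rs `` {y}" using cs unfolding quotient_def by blast
    define P where "P = {K' \<in> components d r. K' \<subseteq> K}"
    have KP: "K = \<Union>P"
    proof (intro set_eqI iffI)
      fix x assume x: "x \<in> K"
      have "Rr `` {x} \<in> components d r" unfolding cr by (rule quotientI) simp
      moreover have "Rr `` {x} \<subseteq> K"
      proof
        fix z assume "z \<in> Rr `` {x}"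
        then have xz: "(x, z) \<in> Rs" using RrRs by blast
        have yx: "(y, x) \<in> Rs" using x y by blast
        have "(y, z) \<in> Rs" using yx xz unfolding Rs_def by (rule rtrancl_trans)
        then show "z \<in> K" using y by blast
      qed
      moreover have "x \<in> Rr `` {x}" unfolding Rr_def by blast
      ultimately show "x \<in> \<Union>P" unfolding P_def by blast
    qed (auto simp: P_def)
    have "(\<Sum>x\<in>K. v x) = (\<Sum>K'\<in>P. \<Sum>x\<in>K'. v x)"
      unfolding KP
    proof -
      have "\<forall>A\<in>P. finite A" by simp
      moreover have "\<forall>A\<in>P. \<forall>B\<in>P. A \<noteq> B \<longrightarrow> A \<inter> B = {}"
        using quotient_disj[OF eqr] unfolding P_def cr by blast
      ultimately show "sum v (\<Union>P) = (\<Sum>K'\<in>P. sum v K')"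
        using sum.Union_disjoint[of P v] by (simp only: comp_def)
    qed
    also have "\<dots> = (\<Sum>K'\<in>P. 0)"
    proof (rule sum.cong)
      fix K' assume "K' \<in> P"
      then have K': "K' \<in> components d r" by (simp add: P_def)
      have "rho0 d r v K' = 0" using fun_cong[OF v, of K'] by (simp only: zero_fun_def)
      then show "(\<Sum>x\<in>K'. v x) = 0" using K' by (simp only: rho0_def if_True)
    qed (rule refl)
    also have "\<dots> = 0" by (rule sum.neutral_const)
    finally have S0: "(\<Sum>x\<in>K. v x) = 0" .
    show ?thesis using True S0 by (simp only: rho0_def zero_fun_def if_True)
  qed
qed

lemma sg_ker_plus: "sg (ker_plus d b)"
  unfolding sg_def ker_plus_def
proof (intro conjI ballI)
  show "0 \<in> {v. rho0 d b v = 0}" by (simp only: mem_Collect_eq rho0_zero)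
  fix u v assume "u \<in> {v. rho0 d b v = 0}" "v \<in> {v. rho0 d b v = 0}"
  then show "u + v \<in> {v. rho0 d b v = 0}" by (simp only: mem_Collect_eq rho0_add add_0_left)
qed

lemma sg_ker_minus:
  fixes d :: "'x::finite \<Rightarrow> 'x \<Rightarrow> real"
  assumes "0 < b" shows "sg (ker_minus d b)"
  unfolding sg_def ker_minus_def
proof (intro conjI ballI)
  show "0 \<in> (\<Union>r\<in>{r. 0 \<le> r \<and> r < b}. {v. rho0 d r v = 0})"
    using assms by (auto simp: rho0_zero intro!: bexI[of _ 0])
  fix u v assume "u \<in> (\<Union>r\<in>{r. 0 \<le> r \<and> r < b}. {v. rho0 d r v = 0})"
    "v \<in> (\<Union>r\<in>{r. 0 \<le> r \<and> r < b}. {v. rho0 d r v = 0})"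
  then obtain r1 r2 where r: "0 \<le> r1" "r1 < b" "rho0 d r1 u = 0" "0 \<le> r2" "r2 < b" "rho0 d r2 v = 0"
    by auto
  have "rho0 d (max r1 r2) u = 0" by (rule rho0_mono[OF _ r(3)]) simp
  moreover have "rho0 d (max r1 r2) v = 0" by (rule rho0_mono[OF _ r(6)]) simp
  ultimately have "rho0 d (max r1 r2) (u + v) = 0" by (simp add: rho0_add)
  then show "u + v \<in> (\<Union>r\<in>{r. 0 \<le> r \<and> r < b}. {v. rho0 d r v = 0})"
    using r by (intro UN_I[of "max r1 r2"]) auto
qed

lemma ker_minus_sub:
  fixes d :: "'x::finite \<Rightarrow> 'x \<Rightarrow> real"
  shows "ker_minus d b \<subseteq> ker_plus d b"
proof
  fix v assume "v \<in> ker_minus d b"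
  then obtain r where "r < b" "rho0 d r v = 0" unfolding ker_minus_def by blast
  then have "rho0 d b v = 0" by (intro rho0_mono[of r b]) simp_all
  then show "v \<in> ker_plus d b" unfolding ker_plus_def by blast
qed

theorem lemma3p4:
  fixes dX :: "'x::finite \<Rightarrow> 'x \<Rightarrow> real" and dZ :: "'z::finite \<Rightarrow> 'z \<Rightarrow> real"
    and f :: "'x \<Rightarrow> 'z" and a b :: real
  assumes "is_metric dX" and "is_metric dZ"
    and "a \<in> barcode dX" and "b \<in> barcode dZ"
  shows "block0 dX dZ f a b =
    (let Ap = lin0 f ` ker_plus dX a; Am = lin0 f ` ker_minus dX a;
         Bp = ker_plus dZ b; Bm = ker_minus dZ b;
         C = ssum Am Bm
     in dim_quot (quot_sub (ssum Ap Bm) C \<inter> quot_sub (ssum Am Bp) C) C)"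
proof -
  have a0: "0 < a" using assms(3) by (simp add: barcode_def)
  have b0: "0 < b" using assms(4) by (simp add: barcode_def)
  show ?thesis
    unfolding block0_def Let_def
    by (intro main_alg sg_image_lin0 sg_ker_plus sg_ker_minus a0 b0 image_mono ker_minus_sub)
qed

end
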